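(* Let $\mathcal{N}$ be an ITPN. If $(M,I)\to(M',I')$ in the interval-based semantics and $(M,I)\approx(M,c)$, then there is a clock valuation $c'$ such that $(M,c)\mapsto(M',c')$ and $(M',I')\approx(M',c')$.
   Context: An ITPN is $\mathcal{N}=\langle P,T,\emptyset,\mathrm{Pre},\mathrm{Post},\mathrm{Inh},M_0,J,\mathit{true}\rangle$ where $P$ (places) and $T$ (transitions) are disjoint non-empty finite sets, $\mathrm{Pre},\mathrm{Post},\mathrm{Inh}:T\to\mathbb{N}^P$, $M_0\in\mathbb{N}^P$, and $J$ assigns to each $t\in T$ an interval with left endpoint $\downarrow J(t)\in\mathbb{Q}_{\ge 0}$ and right endpoint $\uparrow J(t)\in\mathbb{Q}_{\ge0}\cup\{\infty\}$. Time values are non-negative rationals; $\infty-\delta=\infty$. Markings $M\in\mathbb{N}^P$ are compared/added pointwise. $t$ is enabled in $M$ if $M\ge\mathrm{Pre}(t)$; inhibited if some $p$ has $\mathrm{Inh}(t)(p)>0$ and $M(p)\ge\mathrm{Inh}(t)(p)$; active if enabled and not inhibited. $t$ is newly enabled by firing $t_f$ in $M$ iff $\mathrm{Pre}(t)\le M-\mathrm{Pre}(t_f)+\mathrm{Post}(t_f)$ and ($t=t_f$ or not $\mathrm{Pre}(t)\le M-\mathrm{Pre}(t_f)$). Interval-based semantics: states $(M,I)$ with $I(t)$ an interval with endpoints $\downarrow I(t)\in\mathbb{Q}$, $\uparrow I(t)\in\mathbb{Q}\cup\{\infty\}$. $(M,I)\xrightarrow{\delta}(M,I')$ ($\delta\in\mathbb{Q}_{\ge0}$)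 iff for all $t$: $I'(t)=I(t)$ if $t$ is enabled and inhibited in $M$, otherwise $\downarrow I'(t)=\max(0,\downarrow I(t)-\delta)$, $\uparrow I'(t)=\uparrow I(t)-\delta$; and $M\ge\mathrm{Pre}(t)\Rightarrow\uparrow I'(t)\ge0$. $(M,I)\xrightarrow{t_f}(M',I')$ iff $t_f$ active in $M$, $\downarrow I(t_f)=0$, $M'=M-\mathrm{Pre}(t_f)+\mathrm{Post}(t_f)$, and $I'(t)=J(t)$ if $t$ newly enabled by firing $t_f$ in $M$, else $I'(t)=I(t)$. $(M,I)\to(M',I')$ iff $(M,I)\xrightarrow{\delta}(M'',I'')\xrightarrow{t_f}(M',I')$ for some $\delta,t_f,(M'',I'')$. Clock-based semantics: states $(M,c)$ with $c:T\to\mathbb{Q}_{\ge0}$. $\mathrm{mte}(M,c)=\min\{\uparrow J(t)-c(t): t\text{ active in }M,\ \uparrow J(t)\neq\infty\}$ ($\infty$ if empty). Tick: $(M,c)\to_{\mathrm{tick}}(M,c')$ iff some $\tau\in\mathbb{Q}_{\ge0}$, $\tau\le\mathrm{mte}(M,c)$, with $c'(t)=c(t)+\tau$ for $t$ active in $M$ and $c'(t)=c(t)$ otherwise. Apply: $(M,c)\to_{\mathrm{apply}}(M',c')$ iff some $t_f$ active in $M$ with $\downarrow J(t_f)\le c(t_f)\le\uparrow J(t_f)$, $M'=M-\mathrm{Pre}(t_f)+\mathrm{Post}(t_f)$, $c'(t_f)=0$, and for $t\neq t_f$, $c'(t)=c(t)$ if $\mathrm{Pre}(t)\le M-\mathrm{Pre}(t_f)$,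 else $0$. $(M,c)\mapsto(M',c')$ iff $(M,c)\to_{\mathrm{tick}}s\to_{\mathrm{apply}}(M',c')$ for some $s$. $(M,I)\approx(M',c)$ iff $M'=M$ and for every $t$: if $t$ not enabled in $M$ then $c(t)=0$; otherwise if $\uparrow J(t)\ne\infty$ then $c(t)=\uparrow J(t)-\uparrow I(t)$; if $\uparrow J(t)=\infty$ and $\downarrow I(t)>0$ then $c(t)=\downarrow J(t)-\downarrow I(t)$; if $\uparrow J(t)=\infty$ and $\downarrow I(t)\le0$ then $c(t)\ge\downarrow J(t)$ (arbitrary such value).
   Formalization: The state (M,I) ranges only over states reachable from the initial state $(M_0,J)$ by steps $\to$ of the interval-based semantics. The paper assumes this as well. *)

theory Defs
  imports Main "HOL.Rat"
begin

datatype ext = Fin rat | Infty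

fun ext_minus :: "ext \<Rightarrow> rat \<Rightarrow> ext" where
  "ext_minus (Fin a) d = Fin (a - d)"
| "ext_minus Infty d = Infty"

fun ext_le :: "ext \<Rightarrow> ext \<Rightarrow> bool" where
  "ext_le _ Infty = True"
| "ext_le Infty (Fin _) = False"
| "ext_le (Fin a) (Fin b) = (a \<le> b)"

text \<open>An interval is represented by its pair of endpoints (lower, upper).
  Net: Pre, Post, Inh :: 't => 'p => nat, initial marking M0, static intervals J.\<close>

definition valid_J :: "('t \<Rightarrow> rat \<times> ext) \<Rightarrow> bool" where
  "valid_J J = (\<forall>t. fst (J t) \<ge> 0 \<and> ext_le (Fin 0) (snd (J t)))"

definition enabled :: "('t \<Rightarrow> 'p \<Rightarrow> nat) \<Rightarrow> ('p \<Rightarrow> nat) \<Rightarrow> 't \<Rightarrow> bool" where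
  "enabled Pre M t = (Pre t \<le> M)"

definition inhibited :: "('t \<Rightarrow> 'p \<Rightarrow> nat) \<Rightarrow> ('p \<Rightarrow> nat) \<Rightarrow> 't \<Rightarrow> bool" where
  "inhibited Inh M t = (\<exists>p. Inh t p > 0 \<and> M p \<ge> Inh t p)"

definition active :: "('t \<Rightarrow> 'p \<Rightarrow> nat) \<Rightarrow> ('t \<Rightarrow> 'p \<Rightarrow> nat) \<Rightarrow> ('p \<Rightarrow> nat) \<Rightarrow> 't \<Rightarrow> bool" where
  "active Pre Inh M t = (enabled Pre M t \<and> \<not> inhibited Inh M t)"

definition fire :: "('t \<Rightarrow> 'p \<Rightarrow> nat) \<Rightarrow> ('t \<Rightarrow> 'p \<Rightarrow> nat) \<Rightarrow> ('p \<Rightarrow> nat) \<Rightarrow> 't \<Rightarrow> ('p \<Rightarrow> nat)" where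
  "fire Pre Post M tf = (\<lambda>p. M p - Pre tf p + Post tf p)"

definition newly_enabled :: "('t \<Rightarrow> 'p \<Rightarrow> nat) \<Rightarrow> ('t \<Rightarrow> 'p \<Rightarrow> nat) \<Rightarrow> ('p \<Rightarrow> nat) \<Rightarrow> 't \<Rightarrow> 't \<Rightarrow> bool" where
  "newly_enabled Pre Post M tf t =
     (Pre t \<le> fire Pre Post M tf \<and> (t = tf \<or> \<not> Pre t \<le> (\<lambda>p. M p - Pre tf p)))"

definition int_delay :: "('t \<Rightarrow> 'p \<Rightarrow> nat) \<Rightarrow> ('t \<Rightarrow> 'p \<Rightarrow> nat) \<Rightarrow> ('p \<Rightarrow> nat)
     \<Rightarrow> ('t \<Rightarrow> rat \<times> ext) \<Rightarrow> rat \<Rightarrow> ('t \<Rightarrow> rat \<times> ext) \<Rightarrow> bool" where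
  "int_delay Pre Inh M I \<delta> I' =
     (\<delta> \<ge> 0 \<and>
      (\<forall>t. (if enabled Pre M t \<and> inhibited Inh M t then I' t = I t
            else fst (I' t) = max 0 (fst (I t) - \<delta>) \<and> snd (I' t) = ext_minus (snd (I t)) \<delta>)
          \<and> (enabled Pre M t \<longrightarrow> ext_le (Fin 0) (snd (I' t)))))"

definition int_fire :: "('t \<Rightarrow> 'p \<Rightarrow> nat) \<Rightarrow> ('t \<Rightarrow> 'p \<Rightarrow> nat) \<Rightarrow> ('t \<Rightarrow> 'p \<Rightarrow> nat)
     \<Rightarrow> ('t \<Rightarrow> rat \<times> ext) \<Rightarrow> ('p \<Rightarrow> nat) \<Rightarrow> ('t \<Rightarrow> rat \<times> ext) \<Rightarrow> 't
     \<Rightarrow> ('p \<Rightarrow> nat) \<Rightarrow> ('t \<Rightarrow> rat \<times> ext) \<Rightarrow> bool" where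
  "int_fire Pre Post Inh J M I tf M' I' =
     (active Pre Inh M tf \<and> fst (I tf) = 0 \<and> M' = fire Pre Post M tf \<and>
      (\<forall>t. I' t = (if newly_enabled Pre Post M tf t then J t else I t)))"

definition int_step :: "('t \<Rightarrow> 'p \<Rightarrow> nat) \<Rightarrow> ('t \<Rightarrow> 'p \<Rightarrow> nat) \<Rightarrow> ('t \<Rightarrow> 'p \<Rightarrow> nat)
     \<Rightarrow> ('t \<Rightarrow> rat \<times> ext) \<Rightarrow> ('p \<Rightarrow> nat) \<times> ('t \<Rightarrow> rat \<times> ext)
     \<Rightarrow> ('p \<Rightarrow> nat) \<times> ('t \<Rightarrow> rat \<times> ext) \<Rightarrow> bool" where
  "int_step Pre Post Inh J s s' =
     (\<exists>\<delta> I'' tf. int_delay Pre Inh (fst s) (snd s) \<delta> I''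
                \<and> int_fire Pre Post Inh J (fst s) I'' tf (fst s') (snd s'))"

definition int_reachable :: "('t \<Rightarrow> 'p \<Rightarrow> nat) \<Rightarrow> ('t \<Rightarrow> 'p \<Rightarrow> nat) \<Rightarrow> ('t \<Rightarrow> 'p \<Rightarrow> nat)
     \<Rightarrow> ('t \<Rightarrow> rat \<times> ext) \<Rightarrow> ('p \<Rightarrow> nat) \<Rightarrow> ('p \<Rightarrow> nat) \<times> ('t \<Rightarrow> rat \<times> ext) \<Rightarrow> bool" where
  "int_reachable Pre Post Inh J M0 s = (int_step Pre Post Inh J)\<^sup>*\<^sup>* (M0, J) s"

definition clock_val :: "('t \<Rightarrow> rat) \<Rightarrow> bool" where
  "clock_val c = (\<forall>t. c t \<ge> 0)"

definition mte :: "('t \<Rightarrow> 'p \<Rightarrow> nat) \<Rightarrow> ('t \<Rightarrow> 'p \<Rightarrow> nat) \<Rightarrow> ('t \<Rightarrow> rat \<times> ext)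
     \<Rightarrow> ('p \<Rightarrow> nat) \<Rightarrow> ('t \<Rightarrow> rat) \<Rightarrow> ext" where
  "mte Pre Inh J M c =
     (let S = {u - c t | t u. active Pre Inh M t \<and> snd (J t) = Fin u}
      in if S = {} then Infty else Fin (Min S))"

definition tick :: "('t \<Rightarrow> 'p \<Rightarrow> nat) \<Rightarrow> ('t \<Rightarrow> 'p \<Rightarrow> nat) \<Rightarrow> ('t \<Rightarrow> rat \<times> ext)
     \<Rightarrow> ('p \<Rightarrow> nat) \<Rightarrow> ('t \<Rightarrow> rat) \<Rightarrow> ('t \<Rightarrow> rat) \<Rightarrow> bool" where
  "tick Pre Inh J M c c' =
     (\<exists>\<tau>. \<tau> \<ge> 0 \<and> ext_le (Fin \<tau>) (mte Pre Inh J M c) \<and>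
          c' = (\<lambda>t. if active Pre Inh M t then c t + \<tau> else c t))"

definition apply_tr :: "('t \<Rightarrow> 'p \<Rightarrow> nat) \<Rightarrow> ('t \<Rightarrow> 'p \<Rightarrow> nat) \<Rightarrow> ('t \<Rightarrow> 'p \<Rightarrow> nat)
     \<Rightarrow> ('t \<Rightarrow> rat \<times> ext) \<Rightarrow> ('p \<Rightarrow> nat) \<Rightarrow> ('t \<Rightarrow> rat) \<Rightarrow> ('p \<Rightarrow> nat) \<Rightarrow> ('t \<Rightarrow> rat) \<Rightarrow> bool" where
  "apply_tr Pre Post Inh J M c M' c' =
     (\<exists>tf. active Pre Inh M tf \<and> fst (J tf) \<le> c tf \<and> ext_le (Fin (c tf)) (snd (J tf)) \<and>
           M' = fire Pre Post M tf \<and> c' tf = 0 \<and>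
           (\<forall>t. t \<noteq> tf \<longrightarrow> c' t = (if Pre t \<le> (\<lambda>p. M p - Pre tf p) then c t else 0)))"

definition clock_step :: "('t \<Rightarrow> 'p \<Rightarrow> nat) \<Rightarrow> ('t \<Rightarrow> 'p \<Rightarrow> nat) \<Rightarrow> ('t \<Rightarrow> 'p \<Rightarrow> nat)
     \<Rightarrow> ('t \<Rightarrow> rat \<times> ext) \<Rightarrow> ('p \<Rightarrow> nat) \<times> ('t \<Rightarrow> rat) \<Rightarrow> ('p \<Rightarrow> nat) \<times> ('t \<Rightarrow> rat) \<Rightarrow> bool" where
  "clock_step Pre Post Inh J s s' =
     (\<exists>c''. tick Pre Inh J (fst s) (snd s) c'' \<and> apply_tr Pre Post Inh J (fst s) c'' (fst s') (snd s'))"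

definition approx :: "('t \<Rightarrow> 'p \<Rightarrow> nat) \<Rightarrow> ('t \<Rightarrow> rat \<times> ext)
     \<Rightarrow> ('p \<Rightarrow> nat) \<times> ('t \<Rightarrow> rat \<times> ext) \<Rightarrow> ('p \<Rightarrow> nat) \<times> ('t \<Rightarrow> rat) \<Rightarrow> bool" where
  "approx Pre J s s' =
     (fst s' = fst s \<and>
      (\<forall>t. (\<not> enabled Pre (fst s) t \<longrightarrow> snd s' t = 0) \<and>
           (enabled Pre (fst s) t \<longrightarrow>
              (case snd (J t) of
                 Fin u \<Rightarrow> (\<exists>v. snd (snd s t) = Fin v \<and> snd s' t = u - v)
               | Infty \<Rightarrow> (fst (snd s t) > 0 \<longrightarrow> snd s' t = fst (J t) - fst (snd s t))
                        \<and> (fst (snd s t) \<le> 0 \<longrightarrow> snd s' t \<ge> fst (J t))))))"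

end

theory Submission
  imports Defs
begin

definition Inv :: "('t \<Rightarrow> 'p \<Rightarrow> nat) \<Rightarrow> ('t \<Rightarrow> rat \<times> ext) \<Rightarrow> ('p \<Rightarrow> nat) \<Rightarrow> ('t \<Rightarrow> rat \<times> ext) \<Rightarrow> bool" where
  "Inv Pre J M I = (\<forall>t u. enabled Pre M t \<longrightarrow> snd (J t) = Fin u \<longrightarrow>
      (\<exists>v. snd (I t) = Fin v \<and> fst (J t) - u + v \<le> fst (I t)))"

lemma fire_ge: "(\<lambda>p. M p - Pre tf p) \<le> fire Pre Post M tf"
  by (simp add: fire_def le_fun_def)

lemma Inv_step:
  assumes "Inv Pre J M I" "int_step Pre Post Inh J (M, I) (M', I')"
  shows "Inv Pre J M' I'"
proof -
  from assms(2) obtain \<delta> I'' tf where d: "int_delay Pre Inh M I \<delta> I''"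
    and f: "int_fire Pre Post Inh J M I'' tf M' I'"
    by (auto simp: int_step_def)
  have I'': "Inv Pre J M I''"
    unfolding Inv_def
  proof (intro allI impI)
    fix t u assume en: "enabled Pre M t" and u: "snd (J t) = Fin u"
    from assms(1) en u obtain v where v: "snd (I t) = Fin v" "fst (J t) - u + v \<le> fst (I t)"
      by (auto simp: Inv_def)
    show "\<exists>v. snd (I'' t) = Fin v \<and> fst (J t) - u + v \<le> fst (I'' t)"
    proof (cases "enabled Pre M t \<and> inhibited Inh M t")
      case True
      then show ?thesis using d v by (auto simp: int_delay_def)
    next
      case False
      then have "fst (I'' t) = max 0 (fst (I t) - \<delta>)" "snd (I'' t) = ext_minus (snd (I t)) \<delta>"
        using d by (auto simp: int_delay_def split: if_splits dest: spec[of _ t])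
      then show ?thesis using v by (intro exI[of _ "v - \<delta>"]) auto
    qed
  qed
  show ?thesis
    unfolding Inv_def
  proof (intro allI impI)
    fix t u assume en: "enabled Pre M' t" and u: "snd (J t) = Fin u"
    show "\<exists>v. snd (I' t) = Fin v \<and> fst (J t) - u + v \<le> fst (I' t)"
    proof (cases "newly_enabled Pre Post M tf t")
      case True
      then show ?thesis using f u by (auto simp: int_fire_def)
    next
      case False
      then have "t \<noteq> tf" "Pre t \<le> (\<lambda>p. M p - Pre tf p)"
        using en f by (auto simp: newly_enabled_def int_fire_def enabled_def)
      then have "enabled Pre M t" by (auto simp: enabled_def le_fun_def intro: order_trans[OF _ diff_le_self])
      moreover have "I' t = I'' t" using f False by (auto simp: int_fire_def)
      ultimately show ?thesis using I'' u by (auto simp: Inv_def)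
    qed
  qed
qed

lemma Inv_reach:
  assumes "int_reachable Pre Post Inh J M0 (M, I)"
  shows "Inv Pre J M I"
proof -
  have "(int_step Pre Post Inh J)\<^sup>*\<^sup>* (M0, J) (M, I)" using assms by (simp add: int_reachable_def)
  then show ?thesis
  proof (induction "(M, I)" arbitrary: M I rule: rtranclp_induct)
    case base
    then show ?case by (auto simp: Inv_def)
  next
    case (step y)
    then show ?case using Inv_step[of Pre J "fst y" "snd y"] by auto
  qed
qed

theorem mainTheorem2:
  fixes Pre Post Inh :: "'t::finite \<Rightarrow> 'p::finite \<Rightarrow> nat"
    and M0 M M' :: "'p \<Rightarrow> nat"
    and J I I' :: "'t \<Rightarrow> rat \<times> ext"
    and c :: "'t \<Rightarrow> rat"
  assumes "valid_J J"
    and "int_reachable Pre Post Inh J M0 (M, I)"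
    and "int_step Pre Post Inh J (M, I) (M', I')"
    and "clock_val c"
    and "approx Pre J (M, I) (M, c)"
  shows "\<exists>c'. clock_val c' \<and> clock_step Pre Post Inh J (M, c) (M', c')
              \<and> approx Pre J (M', I') (M', c')"
proof -
  have inv: "Inv Pre J M I" using Inv_reach assms(2) by blast
  from assms(3) obtain \<delta> I'' tf where d: "int_delay Pre Inh M I \<delta> I''"
    and f: "int_fire Pre Post Inh J M I'' tf M' I'"
    by (auto simp: int_step_def)
  have d0: "\<delta> \<ge> 0" using d by (simp add: int_delay_def)
  have dI: "\<And>t. (if enabled Pre M t \<and> inhibited Inh M t then I'' t = I t
            else fst (I'' t) = max 0 (fst (I t) - \<delta>) \<and> snd (I'' t) = ext_minus (snd (I t)) \<delta>)
          \<and> (enabled Pre M t \<longrightarrow> ext_le (Fin 0) (snd (I'' t)))"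
    using d by (simp add: int_delay_def)
  have act: "active Pre Inh M tf" and low: "fst (I'' tf) = 0" and M'd: "M' = fire Pre Post M tf"
    and I'd: "\<And>t. I' t = (if newly_enabled Pre Post M tf t then J t else I'' t)"
    using f by (auto simp: int_fire_def)
  have ap: "\<And>t. (\<not> enabled Pre M t \<longrightarrow> c t = 0) \<and>
           (enabled Pre M t \<longrightarrow>
              (case snd (J t) of
                 Fin u \<Rightarrow> (\<exists>v. snd (I t) = Fin v \<and> c t = u - v)
               | Infty \<Rightarrow> (fst (I t) > 0 \<longrightarrow> c t = fst (J t) - fst (I t))
                        \<and> (fst (I t) \<le> 0 \<longrightarrow> c t \<ge> fst (J t))))"
    using assms(5) unfolding approx_def fst_conv snd_conv by blast
  define c'' where "c'' = (\<lambda>t. if active Pre Inh M t then c t + \<delta> else c t)"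
  define c' where "c' = (\<lambda>t. if t = tf then 0 else if Pre t \<le> (\<lambda>p. M p - Pre tf p) then c'' t else 0)"
  have c0: "\<And>t. c t \<ge> 0" using assms(4) by (simp add: clock_val_def)
  have en_of_act: "\<And>t. active Pre Inh M t \<Longrightarrow> enabled Pre M t" by (simp add: active_def)
  have act_notinh: "\<And>t. active Pre Inh M t \<Longrightarrow> \<not> (enabled Pre M t \<and> inhibited Inh M t)"
    by (simp add: active_def)
  have actfin: "\<delta> \<le> u - c t" if a: "active Pre Inh M t" and u: "snd (J t) = Fin u" for t u
  proof -
    from ap[of t] en_of_act[OF a] u obtain v where v: "snd (I t) = Fin v" "c t = u - v" by auto
    from dI[of t] act_notinh[OF a] en_of_act[OF a] have "ext_le (Fin 0) (ext_minus (snd (I t)) \<delta>)"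
      by auto
    with v show ?thesis by simp
  qed
  have tick: "tick Pre Inh J M c c''"
  proof -
    let ?S = "{u - c t | t u. active Pre Inh M t \<and> snd (J t) = Fin u}"
    have "?S \<subseteq> (\<lambda>t. (case snd (J t) of Fin u \<Rightarrow> u | Infty \<Rightarrow> 0) - c t) ` UNIV"
    proof
      fix x assume "x \<in> ?S"
      then obtain t u where "x = u - c t" "snd (J t) = Fin u" by blast
      then show "x \<in> (\<lambda>t. (case snd (J t) of Fin u \<Rightarrow> u | Infty \<Rightarrow> 0) - c t) ` UNIV"
        by (intro image_eqI[of _ _ t]) auto
    qed
    then have fin: "finite ?S" by (rule finite_subset) simp
    have "ext_le (Fin \<delta>) (mte Pre Inh J M c)"
    proof (cases "?S = {}")
      case True then show ?thesis by (simp add: mte_def)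
    next
      case False
      have "\<delta> \<le> Min ?S" using fin False actfin by (subst Min_ge_iff) blast+
      then show ?thesis using False by (simp add: mte_def)
    qed
    then show ?thesis using d0 unfolding tick_def c''_def by blast
  qed
  have entf: "enabled Pre M tf" using act by (simp add: active_def)
  have dtf: "fst (I'' tf) = max 0 (fst (I tf) - \<delta>)" "snd (I'' tf) = ext_minus (snd (I tf)) \<delta>"
    "ext_le (Fin 0) (snd (I'' tf))"
    using dI[of tf] act_notinh[OF act] entf by auto
  have c''tf: "c'' tf = c tf + \<delta>" using act by (simp add: c''_def)
  have bounds: "fst (J tf) \<le> c'' tf \<and> ext_le (Fin (c'' tf)) (snd (J tf))"
  proof (cases "snd (J tf)")
    case (Fin u)
    from ap[of tf] entf Fin obtain v where v: "snd (I tf) = Fin v" "c tf = u - v" by auto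
    from inv entf Fin v have lw: "fst (J tf) - u + v \<le> fst (I tf)" by (auto simp: Inv_def)
    from low dtf have "fst (I tf) \<le> \<delta>" by simp
    then show ?thesis using dtf v lw Fin c''tf by simp
  next
    case Infty
    from low dtf have le: "fst (I tf) \<le> \<delta>" by simp
    from ap[of tf] entf Infty have "(fst (I tf) > 0 \<longrightarrow> c tf = fst (J tf) - fst (I tf))
                        \<and> (fst (I tf) \<le> 0 \<longrightarrow> c tf \<ge> fst (J tf))" by auto
    then show ?thesis using Infty c''tf le d0 by (cases "fst (I tf) > 0") auto
  qed
  have apply_: "apply_tr Pre Post Inh J M c'' M' c'"
    unfolding apply_tr_def using act bounds M'd by (intro exI[of _ tf]) (auto simp: c'_def)
  have cv: "clock_val c'"
    using c0 d0 by (auto simp: clock_val_def c'_def c''_def)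
  have apx: "approx Pre J (M', I') (M', c')"
    unfolding approx_def fst_conv snd_conv
  proof (intro conjI allI refl impI)
    fix t assume ne: "\<not> enabled Pre M' t"
    show "c' t = 0"
    proof (rule ccontr)
      assume "c' t \<noteq> 0"
      then have "Pre t \<le> (\<lambda>p. M p - Pre tf p)" by (auto simp: c'_def split: if_splits)
      then have "Pre t \<le> M'" using fire_ge[of M Pre tf Post] M'd order_trans by blast
      with ne show False by (simp add: enabled_def)
    qed
  next
    fix t assume en': "enabled Pre M' t"
    show "case snd (J t) of
                 Fin u \<Rightarrow> (\<exists>v. snd (I' t) = Fin v \<and> c' t = u - v)
               | Infty \<Rightarrow> (fst (I' t) > 0 \<longrightarrow> c' t = fst (J t) - fst (I' t))
                        \<and> (fst (I' t) \<le> 0 \<longrightarrow> c' t \<ge> fst (J t))"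
    proof (cases "newly_enabled Pre Post M tf t")
      case True
      then have "I' t = J t" using I'd by simp
      moreover have "c' t = 0" using True by (auto simp: c'_def newly_enabled_def)
      ultimately show ?thesis by (cases "snd (J t)") auto
    next
      case False
      then have ntf: "t \<noteq> tf" and pl: "Pre t \<le> (\<lambda>p. M p - Pre tf p)"
        using en' M'd by (auto simp: newly_enabled_def enabled_def)
      then have en: "enabled Pre M t" by (auto simp: enabled_def le_fun_def intro: order_trans[OF _ diff_le_self])
      have I't: "I' t = I'' t" using I'd False by simp
      have c't: "c' t = c'' t" using ntf pl by (simp add: c'_def)
      show ?thesis
      proof (cases "active Pre Inh M t")
        case False
        then have "I'' t = I t" "c'' t = c t" using dI[of t] en
          by (auto simp: c''_def active_def)
        then show ?thesis using ap[of t] en I't c't by (cases "snd (J t)") auto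
      next
        case True
        then have cc: "c'' t = c t + \<delta>" by (simp add: c''_def)
        have dd: "fst (I'' t) = max 0 (fst (I t) - \<delta>)" "snd (I'' t) = ext_minus (snd (I t)) \<delta>"
          using dI[of t] act_notinh[OF True] by auto
        show ?thesis
        proof (cases "snd (J t)")
          case (Fin u)
          from ap[of t] en Fin obtain v where v: "snd (I t) = Fin v" "c t = u - v" by auto
          then show ?thesis using Fin dd cc I't c't by simp
        next
          case Infty
          from ap[of t] en Infty have h: "(fst (I t) > 0 \<longrightarrow> c t = fst (J t) - fst (I t))
                        \<and> (fst (I t) \<le> 0 \<longrightarrow> c t \<ge> fst (J t))" by auto
          then show ?thesis using Infty dd cc I't c't d0
            by (cases "fst (I t) > 0"; cases "fst (I t) > \<delta>") (auto simp: max_def)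
        qed
      qed
    qed
  qed
  show ?thesis using cv tick apply_ apx unfolding clock_step_def by auto
qed

end
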